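(* Let $\alpha>0$, $\sigma_A^2\ge0$, $\eta>0$, $q>0$, let $K^*(x)=\alpha x+\tfrac13[(2x+\alpha^2)^{3/2}-\alpha^3]$ and define \[ h(x)=K^*(x)-\eta\sqrt{2x+q^2}+\eta q,\qquad x\ge0. \] Assume $\nabla h(0)\ge0$. Then $h$ is convex and increasing on $\mathbb{R}_+$. Moreover, the diffusion Bellman error \[ \mathcal{E}^D_B(x)=\min_{u\ge0}\Bigl(x+\tfrac12u^2+(-u+\alpha)\nabla h(x)+\tfrac12\sigma_A^2\nabla^2h(x)\Bigr) \] is bounded over $x\in\mathbb{R}_+$, and $|\mathcal{E}^D_B(x)-\eta|=O\bigl((1+x)^{-1/2}\bigr)$ as $x\to\infty$.
   Context: This is the diffusion approximation of the speed scaling queue $X(t+1)=X(t)-U(t)+A(t+1)$ with cost $c(x,u)=x+\tfrac12u^2$, whose i.i.d. arrivals have mean $\alpha$ and variance $\sigma_A^2$; the diffusion generator is $\mathcal{D}^D_uh(x)=(-u+\alpha)\nabla h(x)+\tfrac12\sigma_A^2\nabla^2h(x)$. *)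

theory Defs
  imports "HOL-Analysis.Analysis" "HOL-Library.Landau_Symbols"
begin

definition Kstar :: "real \<Rightarrow> real \<Rightarrow> real" where
  "Kstar \<alpha> x = \<alpha> * x + (1/3) * ((2 * x + \<alpha>\<^sup>2) powr (3/2) - \<alpha> ^ 3)"

definition hfun :: "real \<Rightarrow> real \<Rightarrow> real \<Rightarrow> real \<Rightarrow> real" where
  "hfun \<alpha> \<eta> q x = Kstar \<alpha> x - \<eta> * sqrt (2 * x + q\<^sup>2) + \<eta> * q"

definition bellman_err_D ::
  "real \<Rightarrow> real \<Rightarrow> (real \<Rightarrow> real) \<Rightarrow> real \<Rightarrow> real" where
  "bellman_err_D \<alpha> \<sigma>A2 h x =
     (INF u\<in>{0..}. x + u\<^sup>2 / 2 + (- u + \<alpha>) * deriv h x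
                    + \<sigma>A2 / 2 * deriv (deriv h) x)"

end

theory Submission
  imports Defs
begin

definition h1 :: "real \<Rightarrow> real \<Rightarrow> real \<Rightarrow> real \<Rightarrow> real" where
  "h1 \<alpha> \<eta> q x = \<alpha> + sqrt (2*x + \<alpha>\<^sup>2) - \<eta> / sqrt (2*x + q\<^sup>2)"

definition h2 :: "real \<Rightarrow> real \<Rightarrow> real \<Rightarrow> real \<Rightarrow> real" where
  "h2 \<alpha> \<eta> q x = 1 / sqrt (2*x + \<alpha>\<^sup>2) + \<eta> / (sqrt (2*x + q\<^sup>2) * (2*x + q\<^sup>2))"

lemma h_deriv:
  assumes "2*x + \<alpha>\<^sup>2 > 0" "2*x + q\<^sup>2 > 0"
  shows "(hfun \<alpha> \<eta> q has_real_derivative h1 \<alpha> \<eta> q x) (at x)"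
proof -
  have p: "((\<lambda>x. (2*x + \<alpha>\<^sup>2) powr (3/2)) has_real_derivative
      (2*x + \<alpha>\<^sup>2) powr (3/2) * (0 * ln (2*x + \<alpha>\<^sup>2) + 2 * (3/2) / (2*x + \<alpha>\<^sup>2))) (at x)"
    by (rule DERIV_powr) (auto intro!: derivative_eq_intros assms)
  have e: "(2*x + \<alpha>\<^sup>2) powr (3/2) * (0 * ln (2*x + \<alpha>\<^sup>2) + 2 * (3/2) / (2*x + \<alpha>\<^sup>2))
       = 3 * sqrt (2*x + \<alpha>\<^sup>2)"
  proof -
    have "(2*x + \<alpha>\<^sup>2) powr (3/2) = (2*x + \<alpha>\<^sup>2) powr (1 + 1/2)"
      by simp
    also have "\<dots> = (2*x + \<alpha>\<^sup>2) * (2*x + \<alpha>\<^sup>2) powr (1/2)"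
      unfolding powr_add using assms by simp
    also have "\<dots> = (2*x + \<alpha>\<^sup>2) * sqrt (2*x + \<alpha>\<^sup>2)"
      using assms by (simp add: powr_half_sqrt)
    finally show ?thesis using assms by (simp add: field_simps)
  qed
  have s: "((\<lambda>x. sqrt (2*x + q\<^sup>2)) has_real_derivative 1 / sqrt (2*x + q\<^sup>2)) (at x)"
    using assms by (auto intro!: derivative_eq_intros simp: field_simps)
  have "((\<lambda>x. \<alpha> * x + (1/3) * ((2 * x + \<alpha>\<^sup>2) powr (3/2) - \<alpha> ^ 3)
     - \<eta> * sqrt (2 * x + q\<^sup>2) + \<eta> * q) has_real_derivative
     \<alpha> * 1 + (1/3) * (3 * sqrt (2*x + \<alpha>\<^sup>2) - 0) - \<eta> * (1 / sqrt (2*x + q\<^sup>2)) + 0) (at x)"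
    by (intro DERIV_add DERIV_diff DERIV_cmult p[unfolded e] s DERIV_ident DERIV_const)
  then show ?thesis
    unfolding hfun_def Kstar_def h1_def by simp
qed

lemma h1_deriv:
  assumes "2*x + \<alpha>\<^sup>2 > 0" "2*x + q\<^sup>2 > 0"
  shows "(h1 \<alpha> \<eta> q has_real_derivative h2 \<alpha> \<eta> q x) (at x)"
proof -
  have "((\<lambda>x. \<alpha> + sqrt (2*x + \<alpha>\<^sup>2) - \<eta> / sqrt (2*x + q\<^sup>2)) has_real_derivative
      h2 \<alpha> \<eta> q x) (at x)"
    using assms unfolding h2_def
    by (auto intro!: derivative_eq_intros simp: field_simps power2_eq_square)
  then show ?thesis by (simp add: h1_def[abs_def])
qed

lemma h1_mono:
  assumes "x \<le> y" "2*x + \<alpha>\<^sup>2 > 0" "2*x + q\<^sup>2 > 0" "\<eta> > 0"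
  shows "h1 \<alpha> \<eta> q x \<le> h1 \<alpha> \<eta> q y"
proof -
  have a: "sqrt (2*x + \<alpha>\<^sup>2) \<le> sqrt (2*y + \<alpha>\<^sup>2)" using assms by simp
  have r: "0 < sqrt (2*x + q\<^sup>2)" "sqrt (2*x + q\<^sup>2) \<le> sqrt (2*y + q\<^sup>2)" using assms by auto
  have b: "\<eta> / sqrt (2*y + q\<^sup>2) \<le> \<eta> / sqrt (2*x + q\<^sup>2)"
    using r assms(4) by (intro divide_left_mono) auto
  show ?thesis unfolding h1_def using a b by linarith
qed

lemma sqrt_lower:
  fixes x a :: real
  assumes "x \<ge> 0" "a > 0"
  shows "sqrt (min 2 (a\<^sup>2)) * sqrt (1 + x) \<le> sqrt (2*x + a\<^sup>2)"
proof -
  have "min 2 (a\<^sup>2) * (1 + x) \<le> 2*x + a\<^sup>2"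
  proof (cases "2 \<le> a\<^sup>2")
    case True then show ?thesis using assms by (simp add: min_def algebra_simps)
  next
    case False
    then have "a\<^sup>2 * (1 + x) = a\<^sup>2 + a\<^sup>2 * x" by (simp add: algebra_simps)
    moreover have "a\<^sup>2 * x \<le> 2 * x" using False assms by (intro mult_right_mono) auto
    ultimately show ?thesis using False by (simp add: min_def)
  qed
  then show ?thesis by (metis real_sqrt_le_mono real_sqrt_mult)
qed

lemma inv_sqrt_bound:
  fixes x a :: real
  assumes "x \<ge> 0" "a > 0"
  shows "1 / sqrt (2*x + a\<^sup>2) \<le> (1 / sqrt (min 2 (a\<^sup>2))) * (1 / sqrt (1 + x))"
proof -
  have p: "0 < sqrt (min 2 (a\<^sup>2)) * sqrt (1 + x)" using assms by auto
  have p2: "0 < 2*x + a\<^sup>2" using assms by (simp add: add_nonneg_pos)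
  have "1 / sqrt (2*x + a\<^sup>2) \<le> 1 / (sqrt (min 2 (a\<^sup>2)) * sqrt (1 + x))"
    using sqrt_lower[OF assms] p p2 by (intro divide_left_mono) (auto intro!: mult_pos_pos)
  then show ?thesis by simp
qed

lemma key_bound:
  fixes x \<alpha> \<eta> q \<sigma> :: real
  assumes x: "x \<ge> 0" and pos: "\<alpha> > 0" "q > 0" "\<eta> > 0" "\<sigma> \<ge> 0"
  shows "\<bar>\<eta> * sqrt (2*x + \<alpha>\<^sup>2) / sqrt (2*x + q\<^sup>2) - (\<eta> / sqrt (2*x + q\<^sup>2))\<^sup>2 / 2
           + \<sigma> / 2 * h2 \<alpha> \<eta> q x - \<eta>\<bar>
         \<le> ((\<eta> * \<bar>\<alpha>\<^sup>2 - q\<^sup>2\<bar> / \<alpha> + \<eta>\<^sup>2 / (2*q) + \<sigma> * \<eta> / (2 * q\<^sup>2))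
               / sqrt (min 2 (q\<^sup>2)) + \<sigma> / 2 / sqrt (min 2 (\<alpha>\<^sup>2))) * (1 / sqrt (1 + x))"
proof -
  define s where "s = sqrt (2*x + \<alpha>\<^sup>2)"
  define r where "r = sqrt (2*x + q\<^sup>2)"
  define K where "K = \<eta> * \<bar>\<alpha>\<^sup>2 - q\<^sup>2\<bar> / \<alpha> + \<eta>\<^sup>2 / (2*q) + \<sigma> * \<eta> / (2 * q\<^sup>2)"
  have s2: "s\<^sup>2 = 2*x + \<alpha>\<^sup>2" unfolding s_def using x pos by simp
  have r2: "r\<^sup>2 = 2*x + q\<^sup>2" unfolding r_def using x pos by simp
  have sa: "s \<ge> \<alpha>"
  proof -
    have "sqrt (\<alpha>\<^sup>2) \<le> s" unfolding s_def using x by (intro real_sqrt_le_mono) simp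
    then show ?thesis using pos by simp
  qed
  have rq: "r \<ge> q"
  proof -
    have "sqrt (q\<^sup>2) \<le> r" unfolding r_def using x by (intro real_sqrt_le_mono) simp
    then show ?thesis using pos by simp
  qed
  have s0: "s > 0" and r0: "r > 0" using sa rq pos by auto
  have h2e: "h2 \<alpha> \<eta> q x = 1 / s + \<eta> / (r * r\<^sup>2)"
    unfolding h2_def s_def r_def using r2 r_def by simp
  have T1: "\<bar>\<eta> * s / r - \<eta>\<bar> \<le> \<eta> * \<bar>\<alpha>\<^sup>2 - q\<^sup>2\<bar> / \<alpha> * (1 / r)"
  proof -
    have "s - r = (s\<^sup>2 - r\<^sup>2) / (s + r)" using s0 r0
      by (simp add: field_simps power2_eq_square)
    then have "\<bar>s - r\<bar> = \<bar>\<alpha>\<^sup>2 - q\<^sup>2\<bar> / (s + r)" using s0 r0 s2 r2 by simp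
    also have "\<dots> \<le> \<bar>\<alpha>\<^sup>2 - q\<^sup>2\<bar> / \<alpha>" using sa r0 pos by (intro divide_left_mono) auto
    finally have d: "\<bar>s - r\<bar> \<le> \<bar>\<alpha>\<^sup>2 - q\<^sup>2\<bar> / \<alpha>" .
    have "\<eta> * s / r - \<eta> = \<eta> * (s - r) * (1 / r)" using r0 by (simp add: field_simps)
    then have "\<bar>\<eta> * s / r - \<eta>\<bar> = \<eta> * \<bar>s - r\<bar> * (1 / r)" using pos r0 by (simp add: abs_mult)
    also have "\<dots> \<le> \<eta> * (\<bar>\<alpha>\<^sup>2 - q\<^sup>2\<bar> / \<alpha>) * (1 / r)"
      using d pos r0 by (intro mult_right_mono mult_left_mono) auto
    finally show ?thesis by simp
  qed
  have T2: "(\<eta> / r)\<^sup>2 / 2 \<le> \<eta>\<^sup>2 / (2*q) * (1 / r)"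
  proof -
    have "(\<eta> / r)\<^sup>2 / 2 = \<eta>\<^sup>2 / (2 * r) * (1 / r)" by (simp add: power2_eq_square)
    also have "\<dots> \<le> \<eta>\<^sup>2 / (2*q) * (1 / r)"
      using rq pos r0 by (intro mult_right_mono divide_left_mono) auto
    finally show ?thesis .
  qed
  have T3: "\<sigma> / 2 * (\<eta> / (r * r\<^sup>2)) \<le> \<sigma> * \<eta> / (2 * q\<^sup>2) * (1 / r)"
  proof -
    have "q\<^sup>2 \<le> r\<^sup>2" using rq pos by (intro power_mono) auto
    then have "\<eta> / r\<^sup>2 \<le> \<eta> / q\<^sup>2" using pos r0 by (intro divide_left_mono) (auto intro!: mult_pos_pos)
    then have "\<sigma> / 2 * (\<eta> / r\<^sup>2) * (1 / r) \<le> \<sigma> / 2 * (\<eta> / q\<^sup>2) * (1 / r)"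
      using pos r0 by (intro mult_right_mono mult_left_mono) auto
    then show ?thesis by (simp add: field_simps)
  qed
  have T4: "0 \<le> \<sigma> / 2 * (1 / s)" and T3': "0 \<le> \<sigma> / 2 * (\<eta> / (r * r\<^sup>2))"
    using pos s0 r0 by auto
  define A where "A = \<eta> * s / r"
  define B where "B = (\<eta> / r)\<^sup>2 / 2"
  define P where "P = \<sigma> / 2 * (1 / s)"
  define Q where "Q = \<sigma> / 2 * (\<eta> / (r * r\<^sup>2))"
  define t where "t = 1 / sqrt (1 + x)"
  define a where "a = 1 / sqrt (min 2 (q\<^sup>2))"
  define b where "b = 1 / sqrt (min 2 (\<alpha>\<^sup>2))"
  have B0: "B \<ge> 0" unfolding B_def by simp
  have hh: "\<sigma> / 2 * h2 \<alpha> \<eta> q x = P + Q" unfolding h2e P_def Q_def by (simp add: distrib_left)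
  have st1: "\<bar>A - B + \<sigma> / 2 * h2 \<alpha> \<eta> q x - \<eta>\<bar> \<le> \<bar>A - \<eta>\<bar> + B + Q + P"
    unfolding hh using T4 T3' B0 unfolding P_def[symmetric] Q_def[symmetric] by (smt (verit))
  have Ks: "K * (1 / r) = \<eta> * \<bar>\<alpha>\<^sup>2 - q\<^sup>2\<bar> / \<alpha> * (1 / r) + \<eta>\<^sup>2 / (2*q) * (1 / r)
      + \<sigma> * \<eta> / (2 * q\<^sup>2) * (1 / r)" unfolding K_def by (simp only: distrib_right)
  have st2: "\<bar>A - \<eta>\<bar> + B + Q + P \<le> K * (1 / r) + P"
    using T1 T2 T3 Ks unfolding A_def B_def Q_def by linarith
  have ra: "1 / r \<le> a * t"
    unfolding r_def a_def t_def using inv_sqrt_bound[OF x pos(2)] .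
  have sb: "1 / s \<le> b * t"
    unfolding s_def b_def t_def using inv_sqrt_bound[OF x pos(1)] .
  have K0: "0 \<le> K" unfolding K_def using pos by auto
  have st3: "K * (1 / r) + P \<le> K * (a * t) + \<sigma> / 2 * (b * t)"
    unfolding P_def using ra sb K0 pos(4) by (intro add_mono mult_left_mono) auto
  have eq: "K * (a * t) + \<sigma> / 2 * (b * t) = (K / sqrt (min 2 (q\<^sup>2)) + \<sigma> / 2 / sqrt (min 2 (\<alpha>\<^sup>2))) * t"
    unfolding a_def b_def by (simp add: field_simps)
  have "\<bar>A - B + \<sigma> / 2 * h2 \<alpha> \<eta> q x - \<eta>\<bar> \<le> (K / sqrt (min 2 (q\<^sup>2)) + \<sigma> / 2 / sqrt (min 2 (\<alpha>\<^sup>2))) * t"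
    using st1 st2 st3 eq by linarith
  then show ?thesis unfolding A_def B_def K_def s_def r_def t_def .
qed

lemma alg_id:
  fixes x \<alpha> s e :: real
  assumes "s\<^sup>2 = 2*x + \<alpha>\<^sup>2"
  shows "x - (\<alpha> + s - e)\<^sup>2 / 2 + \<alpha> * (\<alpha> + s - e) = s * e - e\<^sup>2 / 2"
proof -
  have "x - (\<alpha> + s - e)\<^sup>2 / 2 + \<alpha> * (\<alpha> + s - e) = x + \<alpha>\<^sup>2/2 - s\<^sup>2/2 + s*e - e\<^sup>2/2"
    by (simp add: power2_eq_square field_simps)
  then show ?thesis using assms by linarith
qed

lemma powr_mhalf: "(x::real) \<ge> 0 \<Longrightarrow> (1 + x) powr (-1/2) = 1 / sqrt (1 + x)"
proof -
  assume x: "x \<ge> 0"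
  have "(1 + x) powr (-1/2) = (1 + x) powr (- (1/2))" by simp
  also have "\<dots> = 1 / (1 + x) powr (1/2)" by (rule powr_minus_divide)
  also have "\<dots> = 1 / sqrt (1 + x)" using x by (simp add: powr_half_sqrt)
  finally show ?thesis .
qed

theorem proposition6:
  fixes \<alpha> \<sigma>A2 \<eta> q :: real
  assumes "\<alpha> > 0" and "\<sigma>A2 \<ge> 0" and "\<eta> > 0" and "q > 0"
    and "deriv (hfun \<alpha> \<eta> q) 0 \<ge> 0"
  shows "convex_on {0..} (hfun \<alpha> \<eta> q)
    \<and> mono_on {0..} (hfun \<alpha> \<eta> q)
    \<and> (\<exists>B. \<forall>x\<ge>0. \<bar>bellman_err_D \<alpha> \<sigma>A2 (hfun \<alpha> \<eta> q) x\<bar> \<le> B)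
    \<and> (\<lambda>x. \<bar>bellman_err_D \<alpha> \<sigma>A2 (hfun \<alpha> \<eta> q) x - \<eta>\<bar>)
           \<in> O[at_top](\<lambda>x. (1 + x) powr (-1/2))"
proof -
  define h where "h = hfun \<alpha> \<eta> q"
  define c where "c = min (\<alpha>\<^sup>2) (q\<^sup>2) / 2"
  have c0: "c > 0" unfolding c_def using assms by auto
  have inS: "2*x + \<alpha>\<^sup>2 > 0 \<and> 2*x + q\<^sup>2 > 0" if "x > -c" for x
    using that unfolding c_def by (auto simp: min_def split: if_splits)
  have HD: "(h has_real_derivative h1 \<alpha> \<eta> q x) (at x)" if "x > -c" for x
    unfolding h_def using inS[OF that] by (intro h_deriv) auto
  have D1: "deriv h x = h1 \<alpha> \<eta> q x" if "x > -c" for x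
    using HD[OF that] by (rule DERIV_imp_deriv)
  have D2: "deriv (deriv h) x = h2 \<alpha> \<eta> q x" if "x > -c" for x
  proof (rule DERIV_imp_deriv)
    show "(deriv h has_real_derivative h2 \<alpha> \<eta> q x) (at x)"
    proof (rule has_field_derivative_transform_within_open[where S="{-c<..}"])
      show "(h1 \<alpha> \<eta> q has_real_derivative h2 \<alpha> \<eta> q x) (at x)"
        using inS[OF that] by (intro h1_deriv) auto
      show "open {-c<..}" by simp
      show "x \<in> {-c<..}" using that by simp
      show "h1 \<alpha> \<eta> q y = deriv h y" if "y \<in> {-c<..}" for y
        using D1[of y] that by simp
    qed
  qed
  have h10: "h1 \<alpha> \<eta> q 0 \<ge> 0" using assms(5) D1[of 0] c0 unfolding h_def by simp
  have h1m: "h1 \<alpha> \<eta> q x \<le> h1 \<alpha> \<eta> q y" if "0 \<le> x" "x \<le> y" for x y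
    using inS[of x] that c0 assms(3) by (intro h1_mono) auto
  have h1nn: "h1 \<alpha> \<eta> q x \<ge> 0" if "x \<ge> 0" for x
    using h1m[of 0 x] that h10 by simp
  have conv: "convex_on {0..} h"
  proof (rule convex_on_realI[where f'="h1 \<alpha> \<eta> q"])
    show "connected {0::real..}" by (simp add: is_interval_connected)
    show "(h has_real_derivative h1 \<alpha> \<eta> q x) (at x)" if "x \<in> {0..}" for x
      using that c0 by (intro HD) auto
    show "h1 \<alpha> \<eta> q x \<le> h1 \<alpha> \<eta> q y" if "x \<in> {0..}" "y \<in> {0..}" "x \<le> y" for x y
      using that h1m by auto
  qed
  have mon: "mono_on {0..} h"
  proof (rule mono_onI)
    fix x y :: real assume xy: "x \<in> {0..}" "y \<in> {0..}" "x \<le> y"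
    show "h x \<le> h y"
    proof (rule DERIV_nonneg_imp_increasing_open[OF xy(3)])
      show "\<exists>d. (h has_real_derivative d) (at t) \<and> d \<ge> 0" if "x < t" "t < y" for t
        using HD[of t] h1nn[of t] that xy c0 by auto
      show "continuous_on {x..y} h"
        using xy c0 by (intro continuous_at_imp_continuous_on ballI DERIV_isCont[OF HD]) auto
    qed
  qed
  define C where "C = (\<eta> * \<bar>\<alpha>\<^sup>2 - q\<^sup>2\<bar> / \<alpha> + \<eta>\<^sup>2 / (2*q) + \<sigma>A2 * \<eta> / (2 * q\<^sup>2))
               / sqrt (min 2 (q\<^sup>2)) + \<sigma>A2 / 2 / sqrt (min 2 (\<alpha>\<^sup>2))"
  have C0: "C \<ge> 0" unfolding C_def using assms by auto
  have BE: "bellman_err_D \<alpha> \<sigma>A2 h x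
     = x - (h1 \<alpha> \<eta> q x)\<^sup>2 / 2 + \<alpha> * h1 \<alpha> \<eta> q x + \<sigma>A2 / 2 * h2 \<alpha> \<eta> q x" if x: "x \<ge> 0" for x
  proof -
    define d where "d = h1 \<alpha> \<eta> q x"
    have d0: "d \<ge> 0" unfolding d_def using h1nn x by simp
    have "bellman_err_D \<alpha> \<sigma>A2 h x = (INF u\<in>{0..}. x + u\<^sup>2 / 2 + (- u + \<alpha>) * d
                    + \<sigma>A2 / 2 * h2 \<alpha> \<eta> q x)"
      unfolding bellman_err_D_def d_def using D1[of x] D2[of x] x c0 by simp
    also have "\<dots> = x - d\<^sup>2 / 2 + \<alpha> * d + \<sigma>A2 / 2 * h2 \<alpha> \<eta> q x"
    proof (rule cInf_eq_minimum)
      show "x - d\<^sup>2 / 2 + \<alpha> * d + \<sigma>A2 / 2 * h2 \<alpha> \<eta> q x \<in> (\<lambda>u. x + u\<^sup>2 / 2 + (- u + \<alpha>) * d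
                    + \<sigma>A2 / 2 * h2 \<alpha> \<eta> q x) ` {0..}"
        using d0 by (intro rev_image_eqI[of d]) (auto simp: power2_eq_square algebra_simps)
      fix y assume "y \<in> (\<lambda>u. x + u\<^sup>2 / 2 + (- u + \<alpha>) * d + \<sigma>A2 / 2 * h2 \<alpha> \<eta> q x) ` {0..}"
      then obtain u where y: "y = x + u\<^sup>2 / 2 + (- u + \<alpha>) * d + \<sigma>A2 / 2 * h2 \<alpha> \<eta> q x" by auto
      have "y - (x - d\<^sup>2 / 2 + \<alpha> * d + \<sigma>A2 / 2 * h2 \<alpha> \<eta> q x) = (u - d)\<^sup>2 / 2"
        unfolding y by (simp add: power2_eq_square algebra_simps)
      moreover have "0 \<le> (u - d)\<^sup>2 / 2" by simp
      ultimately show "x - d\<^sup>2 / 2 + \<alpha> * d + \<sigma>A2 / 2 * h2 \<alpha> \<eta> q x \<le> y" by linarith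
    qed
    finally show ?thesis unfolding d_def .
  qed
  have EB: "\<bar>bellman_err_D \<alpha> \<sigma>A2 h x - \<eta>\<bar> \<le> C * (1 / sqrt (1 + x))" if x: "x \<ge> 0" for x
  proof -
    define s where "s = sqrt (2*x + \<alpha>\<^sup>2)"
    define r where "r = sqrt (2*x + q\<^sup>2)"
    have s2: "s\<^sup>2 = 2*x + \<alpha>\<^sup>2" unfolding s_def using x by simp
    have "x - (h1 \<alpha> \<eta> q x)\<^sup>2 / 2 + \<alpha> * h1 \<alpha> \<eta> q x = s * (\<eta> / r) - (\<eta> / r)\<^sup>2 / 2"
      unfolding h1_def s_def[symmetric] r_def[symmetric] by (rule alg_id[OF s2])
    then have "bellman_err_D \<alpha> \<sigma>A2 h x = \<eta> * s / r - (\<eta> / r)\<^sup>2 / 2 + \<sigma>A2 / 2 * h2 \<alpha> \<eta> q x"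
      using BE[OF x] by simp
    then show ?thesis
      using key_bound[OF x assms(1,4,3,2)] unfolding C_def s_def r_def by simp
  qed
  have bnd: "\<exists>B. \<forall>x\<ge>0. \<bar>bellman_err_D \<alpha> \<sigma>A2 h x\<bar> \<le> B"
  proof (intro exI allI impI)
    fix x :: real assume x: "x \<ge> 0"
    have "1 / sqrt (1 + x) \<le> 1" using x by (simp add: divide_le_eq)
    then have "C * (1 / sqrt (1 + x)) \<le> C" using C0 by (metis mult_left_mono mult.right_neutral)
    then show "\<bar>bellman_err_D \<alpha> \<sigma>A2 h x\<bar> \<le> C + \<eta>" using EB[OF x] assms(3) by (smt (verit))
  qed
  have bo: "(\<lambda>x. \<bar>bellman_err_D \<alpha> \<sigma>A2 h x - \<eta>\<bar>) \<in> O[at_top](\<lambda>x. (1 + x) powr (-1/2))"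
  proof (rule bigoI[where c=C])
    show "\<forall>\<^sub>F x in at_top. norm \<bar>bellman_err_D \<alpha> \<sigma>A2 h x - \<eta>\<bar> \<le> C * norm ((1 + x) powr (-1/2))"
      using eventually_ge_at_top[of "0::real"]
    proof eventually_elim
      case (elim x)
      then show ?case using EB[OF elim] powr_mhalf[OF elim] by simp
    qed
  qed
  show ?thesis using conv mon bnd bo unfolding h_def by blast
qed

end
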